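(* Let $D\subset\mathbb{R}^n$ be a domain containing the origin, let $f:D\to\mathbb{R}^n$ be continuously differentiable with $f(0)=0$, and consider $\dot x=f(x)$. Let $\rho:D\to\mathbb{R}$ be a continuously differentiable function such that $\rho(0)=0$ and $\rho(x_0)>0$ for some $x_0$ with arbitrarily small $\|x_0\|$. Let $B=\{x\in\mathbb{R}^n:\|x\|\le r\}$ with $r>0$ such that $B\subseteq D$, and let $U=\{x\in B:\rho(x)>0\}$; write $\rho^{-1}(x)=1/\rho(x)$ on $U$. The equilibrium $x=0$ is unstable if at least one of the following conditions holds for every $x\in U$: 1) $\mathrm{div}\{\rho(x)f(x)\}>\rho(x)\,\mathrm{div}\{f(x)\}$; 2) $\mathrm{div}\{\rho^{-1}(x)f(x)\}<0$ and $\mathrm{div}\{f(x)\}\ge0$; 3) $\mathrm{div}\{\rho(x)f(x)\}>\beta(x)\rho^2(x)\,\mathrm{div}\{\rho^{-1}(x)f(x)\}$, where either $\beta(x)>1$ and $\mathrm{div}\{f(x)\}\ge0$, or $\beta(x)=1$; 4) $\mathrm{div}\{\rho(x)f(x)\}>0$ and $\mathrm{div}\{\rho^{-1}(x)f(x)\}<0$.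
   Context: $\mathrm{div}\{h(x)\}=\sum_i\partial h_i/\partial x_i$; $\|\cdot\|$ is the Euclidean norm. Instability is in the sense of Lyapunov. *)

theory Defs
  imports "HOL-Analysis.Analysis"
begin

definition C1_on :: "('a::real_normed_vector \<Rightarrow> 'b::real_normed_vector) \<Rightarrow> 'a set \<Rightarrow> bool" where
  "C1_on g S \<longleftrightarrow> (\<exists>g'. continuous_on S g' \<and> (\<forall>x\<in>S. (g has_derivative blinfun_apply (g' x)) (at x)))"

definition divergence :: "(real^'n \<Rightarrow> real^'n) \<Rightarrow> real^'n \<Rightarrow> real" where
  "divergence h x = (\<Sum>i\<in>UNIV. (frechet_derivative h (at x) (axis i 1)) $ i)"

definition is_solution :: "(real^'n \<Rightarrow> real^'n) \<Rightarrow> (real^'n) set \<Rightarrow> (real \<Rightarrow> real^'n) \<Rightarrow> real \<Rightarrow> bool" where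
  "is_solution f D x T \<longleftrightarrow> T \<ge> 0 \<and>
     (\<forall>t\<in>{0..T}. x t \<in> D \<and> (x has_vector_derivative f (x t)) (at t within {0..T}))"

definition lyapunov_stable_origin :: "(real^'n \<Rightarrow> real^'n) \<Rightarrow> (real^'n) set \<Rightarrow> bool" where
  "lyapunov_stable_origin f D \<longleftrightarrow>
     (\<forall>\<epsilon>>0. \<exists>\<delta>>0. \<forall>x T. is_solution f D x T \<and> norm (x 0) < \<delta> \<longrightarrow>
        (\<forall>t\<in>{0..T}. norm (x t) < \<epsilon>))"

definition lyapunov_unstable_origin :: "(real^'n \<Rightarrow> real^'n) \<Rightarrow> (real^'n) set \<Rightarrow> bool" where
  "lyapunov_unstable_origin f D \<longleftrightarrow> \<not> lyapunov_stable_origin f D"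

end

theory Submission
  imports Defs
begin

lemma ode_exists:
  fixes F :: "'a::euclidean_space \<Rightarrow> 'a"
  assumes lip: "\<And>x y. norm (F x - F y) \<le> L * norm (x - y)" and L: "L > 0" and T: "T \<ge> 0"
  shows "\<exists>x. x 0 = x0 \<and> continuous_on {0..T} x \<and>
           (\<forall>t\<in>{0..T}. (x has_vector_derivative F (x t)) (at t within {0..T}))"
proof -
  have "L-lipschitz_on UNIV F"
    by (rule lipschitz_onI) (use lip L in \<open>auto simp: dist_norm\<close>)
  then have contF: "continuous_on UNIV F" by (rule lipschitz_on_continuous_on)
  define k where "k = 2*L"
  have k: "k > 0" using L by (simp add: k_def)
  define c where "c t = max 0 (min T t)" for t :: real
  have c01: "c t \<in> {0..T}" for t using T by (auto simp: c_def)
  have contc: "continuous_on UNIV c" unfolding c_def by (intro continuous_intros)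
  define G where "G w u = exp(-k*u) *\<^sub>R (x0 + integral {0..u} (\<lambda>s. F (exp (k * s) *\<^sub>R apply_bcontfun w s)))"
    for w :: "real \<Rightarrow>\<^sub>C 'a" and u
  have contphi: "continuous_on S (\<lambda>s. F (exp (k * s) *\<^sub>R apply_bcontfun w s))" for w :: "real \<Rightarrow>\<^sub>C 'a" and S
    by (rule continuous_on_compose2[OF contF]) (auto intro!: continuous_intros)
  have intphi: "(\<lambda>s. F (exp (k * s) *\<^sub>R apply_bcontfun w s)) integrable_on {a..b}" for w :: "real \<Rightarrow>\<^sub>C 'a" and a b
    by (rule integrable_continuous_real[OF contphi])
  have contG: "continuous_on {0..T} (G w)" for w
    unfolding G_def
    by (intro continuous_intros indefinite_integral_continuous_1 intphi)
  have inb: "(\<lambda>t. G w (c t)) \<in> bcontfun" for w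
  proof -
    have "continuous_on UNIV (\<lambda>t. G w (c t))"
      by (rule continuous_on_compose2[OF contG[of w] contc]) (use c01 in auto)
    moreover have "bounded (range (\<lambda>t. G w (c t)))"
      by (rule bounded_subset[OF compact_imp_bounded[OF compact_continuous_image[OF contG[of w] compact_Icc]]])
        (use c01 in auto)
    ultimately show ?thesis by (simp add: bcontfun_def)
  qed
  define \<Psi> where "\<Psi> w = Bcontfun (\<lambda>t. G w (c t))" for w
  have \<Psi>app: "apply_bcontfun (\<Psi> w) t = G w (c t)" for w t
    by (simp add: \<Psi>_def Bcontfun_inverse[OF inb])
  have key: "dist (G w1 u) (G w2 u) \<le> 1/2 * dist w1 w2" if u: "0 \<le> u" "u \<le> T" for w1 w2 u
  proof -
    define d where "d = dist w1 w2"
    have d: "d \<ge> 0" by (simp add: d_def)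
    let ?p1 = "\<lambda>s. F (exp (k * s) *\<^sub>R apply_bcontfun w1 s)"
    let ?p2 = "\<lambda>s. F (exp (k * s) *\<^sub>R apply_bcontfun w2 s)"
    have "G w1 u - G w2 u = exp(-k*u) *\<^sub>R (integral {0..u} ?p1 - integral {0..u} ?p2)"
      by (simp add: G_def algebra_simps)
    also have "\<dots> = exp(-k*u) *\<^sub>R integral {0..u} (\<lambda>s. ?p1 s - ?p2 s)"
      by (simp add: integral_diff intphi)
    finally have eq: "G w1 u - G w2 u = exp(-k*u) *\<^sub>R integral {0..u} (\<lambda>s. ?p1 s - ?p2 s)" .
    have bnd: "norm (?p1 s - ?p2 s) \<le> L * d * exp (k * s)" for s
    proof -
      have "norm (?p1 s - ?p2 s) \<le> L * norm (exp (k * s) *\<^sub>R apply_bcontfun w1 s - exp (k * s) *\<^sub>R apply_bcontfun w2 s)"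
        by (rule lip)
      also have "\<dots> = L * exp (k * s) * norm (apply_bcontfun w1 s - apply_bcontfun w2 s)"
        by (simp flip: scaleR_diff_right)
      also have "\<dots> \<le> L * exp (k * s) * d"
        using dist_bounded[of w1 s w2] L by (simp add: d_def dist_norm)
      finally show ?thesis by (simp add: mult_ac)
    qed
    have fi: "((\<lambda>s. L * d * exp (k * s)) has_integral (L*d*exp(k*u)/k - L*d*exp(k * 0)/k)) {0..u}"
    proof (rule fundamental_theorem_of_calculus)
      show "0 \<le> u" by fact
      fix s assume "s \<in> {0..u}"
      have "((\<lambda>s. L*d*exp(k * s)/k) has_real_derivative (L*d*(exp(k * s) * k)/k)) (at s within {0..u})"
        using k by (intro derivative_eq_intros) auto
      then show "((\<lambda>s. L*d*exp(k * s)/k) has_vector_derivative (L * d * exp (k * s))) (at s within {0..u})"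
        using k by (simp add: has_real_derivative_iff_has_vector_derivative mult.assoc)
    qed
    have "norm (integral {0..u} (\<lambda>s. ?p1 s - ?p2 s)) \<le> integral {0..u} (\<lambda>s. L * d * exp (k * s))"
      by (rule integral_norm_bound_integral) (use bnd fi intphi in \<open>auto intro: integrable_diff\<close>)
    also have "\<dots> = L*d*(exp(k*u) - 1)/k"
      using integral_unique[OF fi] by (simp add: diff_divide_distrib right_diff_distrib)
    finally have ni: "norm (integral {0..u} (\<lambda>s. ?p1 s - ?p2 s)) \<le> L*d*(exp(k*u) - 1)/k" .
    have "dist (G w1 u) (G w2 u) = exp(-k*u) * norm (integral {0..u} (\<lambda>s. ?p1 s - ?p2 s))"
      by (simp add: dist_norm eq)
    also have "\<dots> \<le> exp(-k*u) * (L*d*(exp(k*u) - 1)/k)"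
      by (rule mult_left_mono[OF ni]) simp
    also have "\<dots> = d/2 * (1 - exp(-k*u))"
      using L by (simp add: k_def field_simps exp_minus)
    also have "\<dots> \<le> d/2" using d by (simp add: mult_left_le)
    finally show ?thesis by (simp add: d_def)
  qed
  have contr: "\<forall>w1 w2. dist (\<Psi> w1) (\<Psi> w2) \<le> 1/2 * dist w1 w2"
  proof (intro allI)
    fix w1 w2
    show "dist (\<Psi> w1) (\<Psi> w2) \<le> 1/2 * dist w1 w2"
      by (rule dist_bound) (use key c01 in \<open>auto simp: \<Psi>app\<close>)
  qed
  obtain w where w: "\<Psi> w = w"
    using banach_fix_type[OF _ _ contr] by auto
  define x where "x t = exp(k*t) *\<^sub>R apply_bcontfun w t" for t
  have xeq: "x t = x0 + integral {0..t} (\<lambda>s. F (x s))" if "t \<in> {0..T}" for t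
  proof -
    have "c t = t" using that by (auto simp: c_def)
    then have "apply_bcontfun w t = G w t" using \<Psi>app[of w t] w by simp
    then show ?thesis by (simp add: x_def G_def exp_minus)
  qed
  have contx: "continuous_on S x" for S unfolding x_def by (intro continuous_intros) simp
  have contFx: "continuous_on S (\<lambda>s. F (x s))" for S
    by (rule continuous_on_compose2[OF contF contx]) auto
  have der: "(x has_vector_derivative F (x t)) (at t within {0..T})" if t: "t \<in> {0..T}" for t
  proof -
    have "((\<lambda>u. x0 + integral {0..u} (\<lambda>s. F (x s))) has_vector_derivative (0 + F (x t))) (at t within {0..T})"
      by (intro derivative_intros integral_has_vector_derivative contFx t)
    then have d1: "((\<lambda>u. x0 + integral {0..u} (\<lambda>s. F (x s))) has_vector_derivative F (x t)) (at t within {0..T})"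
      by simp
    have e: "\<And>s. s \<in> {0..T} \<Longrightarrow> x s = x0 + integral {0..s} (\<lambda>s. F (x s))"
      by (rule xeq)
    show ?thesis
      by (rule has_vector_derivative_transform[OF t e d1])
  qed
  have "x 0 = x0" using xeq[of 0] T by simp
  then show ?thesis using contx der by blast
qed


lemma lin_expand:
  fixes l :: "real^'n \<Rightarrow> real"
  assumes "linear l"
  shows "(\<Sum>i\<in>UNIV. l (axis i 1) * v $ i) = l v"
proof -
  have "l v = l (\<Sum>i\<in>UNIV. v $ i *\<^sub>R axis i 1)"
    using basis_expansion[of v] by (simp add: scalar_mult_eq_scaleR)
  also have "\<dots> = (\<Sum>i\<in>UNIV. v $ i * l (axis i 1))"
    using assms by (simp add: linear_sum linear_scale o_def)
  finally show ?thesis by (simp add: mult.commute)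
qed

lemma div_scaleR:
  fixes g :: "real^'n \<Rightarrow> real" and f :: "real^'n \<Rightarrow> real^'n"
  assumes g: "(g has_derivative g') (at x)" and f: "(f has_derivative f') (at x)"
  shows "divergence (\<lambda>y. g y *\<^sub>R f y) x = g x * (\<Sum>i\<in>UNIV. f' (axis i 1) $ i) + g' (f x)"
proof -
  have "((\<lambda>y. g y *\<^sub>R f y) has_derivative (\<lambda>h. g x *\<^sub>R f' h + g' h *\<^sub>R f x)) (at x)"
    using has_derivative_scaleR[OF g f] by simp
  then have "frechet_derivative (\<lambda>y. g y *\<^sub>R f y) (at x) = (\<lambda>h. g x *\<^sub>R f' h + g' h *\<^sub>R f x)"
    by (rule frechet_derivative_at[symmetric])
  then have "divergence (\<lambda>y. g y *\<^sub>R f y) x = (\<Sum>i\<in>UNIV. g x * f' (axis i 1) $ i + g' (axis i 1) * f x $ i)"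
    by (simp add: divergence_def)
  also have "\<dots> = g x * (\<Sum>i\<in>UNIV. f' (axis i 1) $ i) + (\<Sum>i\<in>UNIV. g' (axis i 1) * f x $ i)"
    by (simp add: sum.distrib sum_distrib_left)
  also have "(\<Sum>i\<in>UNIV. g' (axis i 1) * f x $ i) = g' (f x)"
    by (rule lin_expand[OF has_derivative_linear[OF g]])
  finally show ?thesis .
qed

lemma div_plain:
  fixes f :: "real^'n \<Rightarrow> real^'n"
  assumes f: "(f has_derivative f') (at x)"
  shows "divergence f x = (\<Sum>i\<in>UNIV. f' (axis i 1) $ i)"
  using frechet_derivative_at[OF f] by (simp add: divergence_def)

lemma arith_core:
  fixes p d P A1 A2 :: real
  assumes p: "p > 0" and A1: "A1 = p * d + P" and A2: "A2 = inverse p * d + - (inverse p * inverse p) * P"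
    and c: "A1 > p * d \<or> (A2 < 0 \<and> d \<ge> 0) \<or> (\<exists>\<beta>::real. ((\<beta> > 1 \<and> d \<ge> 0) \<or> \<beta> = 1) \<and> A1 > \<beta> * p\<^sup>2 * A2)
      \<or> (A1 > 0 \<and> A2 < 0)"
  shows "P > 0"
proof -
  have pA2: "p\<^sup>2 * A2 = p * d - P" using p by (simp add: A2 power2_eq_square field_simps)
  have A2neg: "A2 < 0 \<longleftrightarrow> p * d - P < 0"
  proof -
    have "A2 < 0 \<longleftrightarrow> p\<^sup>2 * A2 < 0" using p by (simp add: mult_less_0_iff)
    then show ?thesis using pA2 by simp
  qed
  have h1: "P > 0" if "A1 > p * d" using that A1 by simp
  have h2: "P > 0" if "A2 < 0" "d \<ge> 0" using that A2neg p by (smt (verit) mult_nonneg_nonneg)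
  have h3: "P > 0" if b: "(\<beta> > 1 \<and> d \<ge> 0) \<or> \<beta> = 1" and l: "A1 > \<beta> * p\<^sup>2 * A2" for \<beta> :: real
  proof -
    have "A1 > \<beta> * (p * d - P)" using l pA2 by (simp add: mult.assoc)
    then have e: "(1 + \<beta>) * P > (\<beta> - 1) * (p * d)" using A1 by (simp add: algebra_simps)
    from b show ?thesis
    proof
      assume bb: "\<beta> > 1 \<and> d \<ge> 0"
      then have "(\<beta> - 1) * (p * d) \<ge> 0" using p by simp
      then have "(1 + \<beta>) * P > 0" using e by linarith
      then show ?thesis using bb by (simp add: zero_less_mult_iff)
    next
      assume "\<beta> = 1" then show ?thesis using e by simp
    qed
  qed
  have h4: "P > 0" if "A1 > 0" "A2 < 0" using that A1 A2neg by linarith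
  show ?thesis using c h1 h2 h3 h4 by blast
qed


theorem theorem2p5:
  fixes f :: "real^'n \<Rightarrow> real^'n" and \<rho> :: "real^'n \<Rightarrow> real"
    and D :: "(real^'n) set" and r :: real
  assumes D_open: "open D" and D_conn: "connected D" and D0: "0 \<in> D"
    and f_C1: "C1_on f D" and f0: "f 0 = 0"
    and rho_C1: "C1_on \<rho> D" and rho0: "\<rho> 0 = 0"
    and rho_pos_near: "\<forall>\<epsilon>>0. \<exists>x0\<in>D. norm x0 < \<epsilon> \<and> \<rho> x0 > 0"
    and r_pos: "r > 0" and B_sub: "cball 0 r \<subseteq> D"
    and conds: "\<forall>x\<in>{x \<in> cball 0 r. \<rho> x > 0}.
        divergence (\<lambda>y. \<rho> y *\<^sub>R f y) x > \<rho> x * divergence f x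
      \<or> (divergence (\<lambda>y. inverse (\<rho> y) *\<^sub>R f y) x < 0 \<and> divergence f x \<ge> 0)
      \<or> (\<exists>\<beta>::real. ((\<beta> > 1 \<and> divergence f x \<ge> 0) \<or> \<beta> = 1) \<and>
           divergence (\<lambda>y. \<rho> y *\<^sub>R f y) x
             > \<beta> * (\<rho> x)\<^sup>2 * divergence (\<lambda>y. inverse (\<rho> y) *\<^sub>R f y) x)
      \<or> (divergence (\<lambda>y. \<rho> y *\<^sub>R f y) x > 0 \<and> divergence (\<lambda>y. inverse (\<rho> y) *\<^sub>R f y) x < 0)"
  shows "lyapunov_unstable_origin f D"
proof -
  obtain f' where f'c: "continuous_on D f'" and f'd: "\<And>x. x\<in>D \<Longrightarrow> (f has_derivative blinfun_apply (f' x)) (at x)"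
    using f_C1 unfolding C1_on_def by blast
  obtain r' where r'c: "continuous_on D r'" and r'd: "\<And>x. x\<in>D \<Longrightarrow> (\<rho> has_derivative blinfun_apply (r' x)) (at x)"
    using rho_C1 unfolding C1_on_def by blast
  define B where "B = cball (0::real^'n) r"
  have BD: "B \<subseteq> D" using B_sub B_def by simp
  have cB: "compact B" "convex B" "closed B" "B \<noteq> {}" using r_pos by (auto simp: B_def)
  define P where "P x = blinfun_apply (r' x) (f x)" for x
  have Ppos: "P x > 0" if xB: "x \<in> B" and px: "\<rho> x > 0" for x
  proof -
    have xD: "x \<in> D" using xB BD by auto
    have inv: "((\<lambda>y. inverse (\<rho> y)) has_derivative (\<lambda>h. - (inverse (\<rho> x) * r' x h * inverse (\<rho> x)))) (at x)"
      using Deriv.has_derivative_inverse[OF _ r'd[OF xD]] px by simp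
    have d1: "divergence (\<lambda>y. \<rho> y *\<^sub>R f y) x = \<rho> x * divergence f x + P x"
      using div_scaleR[OF r'd[OF xD] f'd[OF xD]] div_plain[OF f'd[OF xD]] by (simp add: P_def)
    have d2: "divergence (\<lambda>y. inverse (\<rho> y) *\<^sub>R f y) x
        = inverse (\<rho> x) * divergence f x + - (inverse (\<rho> x) * inverse (\<rho> x)) * P x"
      using div_scaleR[OF inv f'd[OF xD]] div_plain[OF f'd[OF xD]]
      by (simp add: P_def blinfun.scaleR_left)
    have xin: "x \<in> {x \<in> cball 0 r. \<rho> x > 0}" using xB px by (simp add: B_def)
    show ?thesis by (rule arith_core[OF px d1 d2 conds[rule_format, OF xin]])
  qed
  have contf: "continuous_on D f"
    by (rule has_derivative_continuous_on[of D f "\<lambda>x. blinfun_apply (f' x)"])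
      (use f'd has_derivative_at_withinI in blast)
  have contr: "continuous_on D \<rho>"
    by (rule has_derivative_continuous_on[of D \<rho> "\<lambda>x. blinfun_apply (r' x)"])
      (use r'd has_derivative_at_withinI in blast)
  have contP: "continuous_on B P"
    unfolding P_def
    by (intro blinfun.continuous_on continuous_on_subset[OF r'c BD] continuous_on_subset[OF contf BD])
  have "compact (f' ` B)" by (rule compact_continuous_image[OF continuous_on_subset[OF f'c BD] cB(1)])
  then obtain Mf where Mf: "Mf > 0" "\<forall>y\<in>f' ` B. norm y \<le> Mf"
    using compact_imp_bounded[of "f' ` B"] unfolding bounded_pos by blast
  have flip: "norm (f x - f y) \<le> Mf * norm (x - y)" if "x\<in>B" "y\<in>B" for x y
    by (rule differentiable_bound[where f'="\<lambda>x. blinfun_apply (f' x)", OF cB(2) _ _ that])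
      (use f'd BD Mf in \<open>auto intro: has_derivative_at_withinI simp: norm_blinfun.rep_eq[symmetric]\<close>)
  define F where "F z = f (closest_point B z)" for z
  have Flip: "norm (F x - F y) \<le> Mf * norm (x - y)" for x y
  proof -
    have "norm (F x - F y) \<le> Mf * norm (closest_point B x - closest_point B y)"
      unfolding F_def by (rule flip) (use closest_point_in_set cB in auto)
    also have "\<dots> \<le> Mf * norm (x - y)"
      using closest_point_lipschitz[OF cB(2) cB(3) cB(4)] Mf by (simp add: dist_norm mult_left_mono)
    finally show ?thesis .
  qed
  have FB: "F x = f x" if "x \<in> B" for x using closest_point_self[OF that] by (simp add: F_def)
  show ?thesis unfolding lyapunov_unstable_origin_def lyapunov_stable_origin_def
  proof
    assume st: "\<forall>\<epsilon>>0. \<exists>\<delta>>0. \<forall>x T. is_solution f D x T \<and> norm (x 0) < \<delta> \<longrightarrow> (\<forall>t\<in>{0..T}. norm (x t) < \<epsilon>)"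
    obtain \<delta> where \<delta>: "\<delta> > 0" and st\<delta>: "\<And>x T. is_solution f D x T \<Longrightarrow> norm (x 0) < \<delta> \<Longrightarrow> \<forall>t\<in>{0..T}. norm (x t) < r"
      using st r_pos by blast
    have "min \<delta> r > 0" using \<delta> r_pos by simp
    then obtain x0 where x0: "x0 \<in> D" "norm x0 < min \<delta> r" "\<rho> x0 > 0" using rho_pos_near by blast
    define a where "a = \<rho> x0"
    have a: "a > 0" using x0 a_def by simp
    have x0B: "x0 \<in> B" using x0 by (simp add: B_def)
    define K where "K = B \<inter> \<rho> -` {a..}"
    have contrB: "continuous_on B \<rho>" using continuous_on_subset[OF contr BD] .
    have "closed K" unfolding K_def by (rule continuous_closed_preimage[OF contrB cB(3) closed_atLeast])
    then have "compact (B \<inter> K)" by (rule compact_Int_closed[OF cB(1)])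
    moreover have "B \<inter> K = K" by (auto simp: K_def)
    ultimately have cK: "compact K" by simp
    have Kne: "K \<noteq> {}" using x0B by (auto simp: K_def a_def)
    have KB: "K \<subseteq> B" by (auto simp: K_def)
    obtain xm where xm: "xm \<in> K" "\<forall>y\<in>K. P xm \<le> P y"
      using continuous_attains_inf[OF cK Kne continuous_on_subset[OF contP KB]] by blast
    define \<gamma> where "\<gamma> = P xm"
    have \<gamma>: "\<gamma> > 0" unfolding \<gamma>_def using xm(1) a by (intro Ppos) (auto simp: K_def)
    obtain xM where xM: "xM \<in> B" "\<forall>y\<in>B. \<rho> y \<le> \<rho> xM"
      using continuous_attains_sup[OF cB(1) cB(4) contrB] by blast
    define Mr where "Mr = \<rho> xM"
    have aMr: "a \<le> Mr" using xM x0B by (simp add: Mr_def a_def)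
    define T where "T = (Mr - a)/\<gamma> + 1"
    have T: "T \<ge> 0" "\<gamma> * T > Mr - a"
      using aMr \<gamma> by (auto simp: T_def field_simps)
    obtain x where x: "x 0 = x0" "continuous_on {0..T} x"
       "\<And>t. t\<in>{0..T} \<Longrightarrow> (x has_vector_derivative F (x t)) (at t within {0..T})"
      using ode_exists[OF Flip Mf(1) T(1), of x0] by blast
    show False
    proof (cases "\<exists>t\<in>{0..T}. norm (x t) \<ge> r")
      case True
      define S where "S = {0..T} \<inter> (\<lambda>t. norm (x t)) -` {r..}"
      have contn: "continuous_on {0..T} (\<lambda>t. norm (x t))" using x(2) by (intro continuous_intros)
      have "closed S" unfolding S_def
        by (rule continuous_closed_preimage[OF contn closed_atLeastAtMost closed_atLeast])
      moreover have "S \<noteq> {}" using True by (auto simp: S_def)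
      moreover have bddS: "bdd_below S" by (rule bdd_belowI[of _ 0]) (auto simp: S_def)
      ultimately have t1S: "Inf S \<in> S" by (intro closed_contains_Inf)
      define t1 where "t1 = Inf S"
      have t1le: "t1 \<le> s" if "s\<in>S" for s unfolding t1_def using cInf_lower[OF that bddS] .
      have t1: "0 \<le> t1" "t1 \<le> T" "r \<le> norm (x t1)" using t1S by (auto simp: S_def t1_def)
      have n0: "norm (x 0) \<le> r" using x(1) x0 by simp
      have "continuous_on {0..t1} (\<lambda>t. norm (x t))"
        by (rule continuous_on_subset[OF contn]) (use t1 in auto)
      then obtain t' where t': "0 \<le> t'" "t' \<le> t1" "norm (x t') = r"
        using IVT'[of "\<lambda>t. norm (x t)" 0 r t1] n0 t1 by blast
      have inB: "norm (x s) \<le> r" if s: "s \<in> {0..t'}" for s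
      proof (cases "s < t1")
        case True then have "s \<notin> S" using t1le by force
        then show ?thesis using s t' t1 by (auto simp: S_def)
      next
        case False then have "s = t'" using s t' by auto
        then show ?thesis using t' by simp
      qed
      have sol: "is_solution f D x t'"
        unfolding is_solution_def
      proof (intro conjI ballI)
        show "0 \<le> t'" by fact
        fix s assume s: "s \<in> {0..t'}"
        have sB: "x s \<in> B" using inB[OF s] by (simp add: B_def)
        show "x s \<in> D" using sB BD by auto
        have "(x has_vector_derivative F (x s)) (at s within {0..T})" using x(3) s t' t1 by auto
        then have "(x has_vector_derivative F (x s)) (at s within {0..t'})"
          by (rule has_vector_derivative_within_subset) (use t' t1 in auto)
        then show "(x has_vector_derivative f (x s)) (at s within {0..t'})" using FB[OF sB] by simp
      qed
      have "norm (x 0) < \<delta>" using x(1) x0 by simp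
      then have "norm (x t') < r" using st\<delta>[OF sol] t' by auto
      then show False using t' by simp
    next
      case False
      then have inB: "x t \<in> B" if "t \<in> {0..T}" for t using that by (auto simp: B_def not_le intro: less_imp_le)
      define g where "g t = \<rho> (x t)" for t
      have gder: "(g has_real_derivative P (x t)) (at t within {0..T})" if t: "t \<in> {0..T}" for t
      proof -
        have xt: "x t \<in> D" using inB[OF t] BD by auto
        have "(x has_vector_derivative f (x t)) (at t within {0..T})" using x(3)[OF t] FB[OF inB[OF t]] by simp
        then have "((\<rho> \<circ> x) has_vector_derivative (r' (x t)) (f (x t))) (at t within {0..T})"
          by (rule vector_derivative_diff_chain_within) (rule has_derivative_at_withinI[OF r'd[OF xt]])
        then show ?thesis by (simp add: g_def[abs_def] P_def o_def has_real_derivative_iff_has_vector_derivative)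
      qed
      have xD: "x ` {0..T} \<subseteq> D" using inB BD by auto
      have contg: "continuous_on {0..T} g"
        unfolding g_def by (rule continuous_on_compose2[OF contr x(2) xD])
      have ga: "g t \<ge> a" if t: "t \<in> {0..T}" for t
      proof (rule ccontr)
        assume "\<not> a \<le> g t" then have gt: "g t < a" by simp
        define C where "C = {0..t} \<inter> g -` {a..}"
        have "continuous_on {0..t} g" by (rule continuous_on_subset[OF contg]) (use t in auto)
        then have "closed C" unfolding C_def
          by (rule continuous_closed_preimage[OF _ closed_atLeastAtMost closed_atLeast])
        moreover have "0 \<in> C" using t x(1) by (simp add: C_def g_def a_def)
        then have "C \<noteq> {}" by auto
        moreover have bddC: "bdd_above C" by (rule bdd_aboveI[of _ t]) (auto simp: C_def)
        ultimately have sC: "Sup C \<in> C" by (intro closed_contains_Sup)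
        define s where "s = Sup C"
        have s: "0 \<le> s" "s \<le> t" "g s \<ge> a" using sC by (auto simp: C_def s_def)
        have "s \<noteq> t" using gt s by auto
        then have st: "s < t" using s by simp
        have sT: "s \<in> {0..T}" using s t by auto
        have "x s \<in> K" using inB[OF sT] s by (simp add: K_def g_def)
        then have "P (x s) \<ge> \<gamma>" using xm \<gamma>_def by auto
        then have "P (x s) > 0" using \<gamma> by simp
        then obtain d where d: "d > 0" "\<forall>h>0. s + h \<in> {0..T} \<longrightarrow> h < d \<longrightarrow> g s < g (s + h)"
          using has_real_derivative_pos_inc_right[OF gder[OF sT]] by blast
        define h where "h = min (d/2) (t - s)"
        have h: "h > 0" "h < d" "s + h \<le> t" using d st by (auto simp: h_def)
        then have "s + h \<in> {0..T}" using s t by auto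
        then have "g (s + h) > g s" using d h by blast
        then have "s + h \<in> C" using s h by (auto simp: C_def)
        then have "s + h \<le> s" unfolding s_def by (rule cSup_upper[OF _ bddC])
        then show False using h by simp
      qed
      have Pg: "P (x t) \<ge> \<gamma>" if t: "t \<in> {0..T}" for t
      proof -
        have "x t \<in> K" using inB[OF t] ga[OF t] by (simp add: K_def g_def)
        then show ?thesis using xm \<gamma>_def by auto
      qed
      have "g 0 - \<gamma> * 0 \<le> g T - \<gamma> * T"
      proof (rule DERIV_nonneg_imp_increasing_open[of 0 T "\<lambda>t. g t - \<gamma> * t"])
        show "0 \<le> T" by fact
        show "continuous_on {0..T} (\<lambda>t. g t - \<gamma> * t)" by (intro continuous_intros contg)
        fix t :: real assume t0: "0 < t" and tT: "t < T"
        have tt: "t \<in> {0..T}" using t0 tT by auto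
        have g1: "(g has_real_derivative P (x t)) (at t)"
          using gder[OF tt] by (simp add: at_within_Icc_at[OF t0 tT])
        have "((\<lambda>t. g t - \<gamma> * t) has_real_derivative (P (x t) - \<gamma>)) (at t)"
          by (auto intro!: derivative_eq_intros g1)
        then show "\<exists>y. ((\<lambda>t. g t - \<gamma> * t) has_real_derivative y) (at t) \<and> 0 \<le> y"
          using Pg[OF tt] by auto
      qed
      then have "g T \<ge> a + \<gamma> * T" using x(1) by (simp add: g_def a_def)
      moreover have "g T \<le> Mr" using xM inB[of T] T by (simp add: g_def Mr_def)
      ultimately show False using T by linarith
    qed
  qed
qed

end
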